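(* Every stag hunt is weakly acyclic; that is, every weakly maximal state of a stag hunt is a pure Nash equilibrium. Equivalently, from every profile of a stag hunt there is a finite sequence of strictly profitable unilateral deviations ending at a pure Nash equilibrium.
   Context: A stag hunt is a game with players $I=\{1,\dots,n\}$, each with strategy set $S_i=\{A,D\}$, given by a constant $c\in\mathbb{R}$ and, for each $i$, a function $f_i$ defined on subsets $T\subseteq I$ with $i\in T$ that is strictly increasing with respect to inclusion ($T\subsetneq T'$ implies $f_i(T)<f_i(T')$). For a profile $s$ let $T(s)=\{j: s_j=A\}$; the payoffs are $u_i(s)=f_i(T(s))$ if $s_i=A$ and $u_i(s)=c$ if $s_i=D$. Moreover $f_i(I)>c$ for all $i$ (so everyone prefers the all-$A$ profile $A^n$) and $f_i(\{i\})<c$ for all $i$ (unilateral deviations from the all-$D$ profile $D^n$ are harmful). For a profile $s$ and $s_i'$, $(s_i',s_{-i})$ denotes $s$ with player $i$'s strategy replaced. A pure Nash equilibrium is $s$ with $u_i(s)\ge u_i(s_i',s_{-i})$ for all $i,s_i'$. The strict deployment graph has vertex set the profiles and an arc $(s,s')$ iff $s'=(s_i',s_{-i})$ for some $i$ with $u_i(s')>u_i(s)$. Define $s\succeq s'$ iff there is a directed path (possibly of length $0$) in this graph from $s'$ to $s$, and $s\succ s'$ iff $s\succeq s'$ and not $s'\succeq s$. A weakly maximal state is an $s^*$ with no $s$ satisfying $s\succ s^*$. A game is weakly acyclic if all its weakly maximal states are pure Nash equilibria. *)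

theory Defs
  imports Complex_Main
begin

datatype strat = A | D

definition nash :: "('i \<Rightarrow> ('i \<Rightarrow> 's) \<Rightarrow> real) \<Rightarrow> ('i \<Rightarrow> 's) \<Rightarrow> bool" where
  "nash u s \<longleftrightarrow> (\<forall>i x. u i s \<ge> u i (s(i := x)))"

definition sdg_arc :: "('i \<Rightarrow> ('i \<Rightarrow> 's) \<Rightarrow> real) \<Rightarrow> ('i \<Rightarrow> 's) \<Rightarrow> ('i \<Rightarrow> 's) \<Rightarrow> bool" where
  "sdg_arc u s s' \<longleftrightarrow> (\<exists>i x. s' = s(i := x) \<and> u i s' > u i s)"

definition sdg_ge :: "('i \<Rightarrow> ('i \<Rightarrow> 's) \<Rightarrow> real) \<Rightarrow> ('i \<Rightarrow> 's) \<Rightarrow> ('i \<Rightarrow> 's) \<Rightarrow> bool" where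
  "sdg_ge u s s' \<longleftrightarrow> (sdg_arc u)\<^sup>*\<^sup>* s' s"

definition sdg_gt :: "('i \<Rightarrow> ('i \<Rightarrow> 's) \<Rightarrow> real) \<Rightarrow> ('i \<Rightarrow> 's) \<Rightarrow> ('i \<Rightarrow> 's) \<Rightarrow> bool" where
  "sdg_gt u s s' \<longleftrightarrow> sdg_ge u s s' \<and> \<not> sdg_ge u s' s"

definition weakly_maximal :: "('i \<Rightarrow> ('i \<Rightarrow> 's) \<Rightarrow> real) \<Rightarrow> ('i \<Rightarrow> 's) \<Rightarrow> bool" where
  "weakly_maximal u s0 \<longleftrightarrow> \<not> (\<exists>s. sdg_gt u s s0)"

definition weakly_acyclic :: "('i \<Rightarrow> ('i \<Rightarrow> 's) \<Rightarrow> real) \<Rightarrow> bool" where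
  "weakly_acyclic u \<longleftrightarrow> (\<forall>s. weakly_maximal u s \<longrightarrow> nash u s)"

definition Tset :: "('i \<Rightarrow> strat) \<Rightarrow> 'i set" where
  "Tset s = {j. s j = A}"

definition stag_payoff :: "('i \<Rightarrow> 'i set \<Rightarrow> real) \<Rightarrow> real \<Rightarrow> 'i \<Rightarrow> ('i \<Rightarrow> strat) \<Rightarrow> real" where
  "stag_payoff f c i s = (if s i = A then f i (Tset s) else c)"

definition stag_hunt :: "('i \<Rightarrow> 'i set \<Rightarrow> real) \<Rightarrow> real \<Rightarrow> bool" where
  "stag_hunt f c \<longleftrightarrow>
     (\<forall>i T T'. i \<in> T \<longrightarrow> T \<subset> T' \<longrightarrow> f i T < f i T') \<and>
     (\<forall>i. f i UNIV > c) \<and>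
     (\<forall>i. f i {i} < c)"

end

theory Submission
  imports Defs
begin

lemma strat_cases: "x = A \<or> x = D" by (cases x) auto

lemma Tset_upd_A: "Tset (s(i := A)) = insert i (Tset s)"
  by (auto simp: Tset_def)
lemma Tset_upd_D: "Tset (s(i := D)) = Tset s - {i}"
  by (auto simp: Tset_def)

lemma up:
  fixes f :: "'i::finite \<Rightarrow> 'i set \<Rightarrow> real"
  shows "\<exists>s'. (sdg_arc (stag_payoff f c))\<^sup>*\<^sup>* s s' \<and>
     (\<forall>i. s' i = D \<longrightarrow> f i (insert i (Tset s')) \<le> c)"
proof (induction "card (- Tset s)" arbitrary: s rule: less_induct)
  case less
  show ?case
  proof (cases "\<exists>i. s i = D \<and> f i (insert i (Tset s)) > c")
    case False
    then show ?thesis by (metis not_le rtranclp.rtrancl_refl)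
  next
    case True
    then obtain i where i: "s i = D" "f i (insert i (Tset s)) > c" by blast
    let ?s = "s(i := A)"
    have arc: "sdg_arc (stag_payoff f c) s ?s"
      unfolding sdg_arc_def using i
      by (intro exI[of _ i] exI[of _ A]) (auto simp: stag_payoff_def Tset_upd_A)
    have "i \<in> - Tset s" "i \<notin> - Tset ?s" using i by (auto simp: Tset_def)
    then have "- Tset ?s \<subset> - Tset s" by (auto simp: Tset_def)
    then have "card (- Tset ?s) < card (- Tset s)" by (simp add: psubset_card_mono)
    from less[OF this] obtain s' where "(sdg_arc (stag_payoff f c))\<^sup>*\<^sup>* ?s s'"
      "\<forall>i. s' i = D \<longrightarrow> f i (insert i (Tset s')) \<le> c" by blast
    then show ?thesis using arc by (meson converse_rtranclp_into_rtranclp)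
  qed
qed

lemma down:
  fixes f :: "'i::finite \<Rightarrow> 'i set \<Rightarrow> real"
  assumes sh: "stag_hunt f c"
  shows "(\<forall>i. s i = D \<longrightarrow> f i (insert i (Tset s)) \<le> c) \<Longrightarrow>
    \<exists>e. (sdg_arc (stag_payoff f c))\<^sup>*\<^sup>* s e \<and> nash (stag_payoff f c) e"
proof (induction "card (Tset s)" arbitrary: s rule: less_induct)
  case less
  have mono: "\<And>i T T'. i \<in> T \<Longrightarrow> T \<subset> T' \<Longrightarrow> f i T < f i T'"
    using sh unfolding stag_hunt_def by blast
  show ?case
  proof (cases "\<exists>i. s i = A \<and> f i (Tset s) < c")
    case False
    have "nash (stag_payoff f c) s"
      unfolding nash_def
    proof (intro allI)
      fix i x
      show "stag_payoff f c i (s(i := x)) \<le> stag_payoff f c i s"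
        using False less.prems strat_cases[of x] strat_cases[of "s i"]
        by (auto simp: stag_payoff_def Tset_upd_A Tset_upd_D fun_upd_idem)
    qed
    then show ?thesis by blast
  next
    case True
    then obtain i where i: "s i = A" "f i (Tset s) < c" by blast
    let ?s = "s(i := D)"
    have arc: "sdg_arc (stag_payoff f c) s ?s"
      unfolding sdg_arc_def using i
      by (intro exI[of _ i] exI[of _ D]) (auto simp: stag_payoff_def)
    have sub: "Tset ?s \<subset> Tset s" using i by (auto simp: Tset_def)
    then have "card (Tset ?s) < card (Tset s)" by (simp add: psubset_card_mono)
    moreover have "\<forall>j. ?s j = D \<longrightarrow> f j (insert j (Tset ?s)) \<le> c"
    proof (intro allI impI)
      fix j assume j: "?s j = D"
      show "f j (insert j (Tset ?s)) \<le> c"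
      proof (cases "j = i")
        case True
        have "insert j (Tset ?s) = Tset s" using i True by (auto simp: Tset_def)
        then show ?thesis using i True by simp
      next
        case False
        then have sj: "s j = D" using j by simp
        have "insert j (Tset ?s) \<subset> insert j (Tset s)"
          using i False by (auto simp: Tset_def)
        then have "f j (insert j (Tset ?s)) < f j (insert j (Tset s))"
          by (intro mono) auto
        then show ?thesis using less.prems sj by fastforce
      qed
    qed
    ultimately obtain e where "(sdg_arc (stag_payoff f c))\<^sup>*\<^sup>* ?s e"
      "nash (stag_payoff f c) e" using less.hyps by blast
    then show ?thesis using arc by (meson converse_rtranclp_into_rtranclp)
  qed
qed

lemma nash_no_arc: "nash u e \<Longrightarrow> \<not> sdg_arc u e s"
  unfolding nash_def sdg_arc_def by (metis not_le)

lemma nash_rtr: "nash u e \<Longrightarrow> (sdg_arc u)\<^sup>*\<^sup>* e s \<Longrightarrow> s = e"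
  by (metis converse_rtranclpE nash_no_arc)

theorem theorem4:
  fixes f :: "'i::finite \<Rightarrow> 'i set \<Rightarrow> real" and c :: real
  assumes "stag_hunt f c"
  shows "weakly_acyclic (stag_payoff f c)"
  unfolding weakly_acyclic_def
proof (intro allI impI)
  fix s assume wm: "weakly_maximal (stag_payoff f c) s"
  show "nash (stag_payoff f c) s"
  proof (rule ccontr)
    assume nn: "\<not> nash (stag_payoff f c) s"
    obtain s1 where "(sdg_arc (stag_payoff f c))\<^sup>*\<^sup>* s s1"
      "\<forall>i. s1 i = D \<longrightarrow> f i (insert i (Tset s1)) \<le> c" using up by blast
    with down[OF assms] obtain e where
      e: "(sdg_arc (stag_payoff f c))\<^sup>*\<^sup>* s e" "nash (stag_payoff f c) e"
      by (meson rtranclp_trans)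
    have "\<not> (sdg_arc (stag_payoff f c))\<^sup>*\<^sup>* e s"
      using nash_rtr[OF e(2)] nn e(2) by blast
    then have "sdg_gt (stag_payoff f c) e s"
      using e unfolding sdg_gt_def sdg_ge_def by blast
    then show False using wm unfolding weakly_maximal_def by blast
  qed
qed

end
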